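(* For every input $\sigma$ of List Update with Delays, every time $t$ and every $N\in[n]$, let $K$ be the set of indices $k\in[m]$ such that $e_k$ lies in one of positions $1,\dots,N$ of ALG's list at time $t$ and $r_k$ is, at time $t$, either active in ALG or frozen with $RC_k$ in ALG. Then $$\sum_{k\in K}d_k\le 2N.$$
   Context: List Update with Delays. A set $\mathbb{E}$ of $n$ elements is kept in an ordered list (position $1$ is the head). An input $\sigma$ is a sequence of requests $r_1,\dots,r_m$; request $r_k$ specifies an element $e_k\in\mathbb{E}$, an arrival time $a_k$ and a delay function $D_k$ which is non-negative, non-decreasing, and $0$ up to time $a_k$. An algorithm may perform an access up to position $i$ at cost $i$, serving every pending request whose element currently lies in positions $1,\dots,i$, and may swap adjacent elements at cost $1$; actions are instantaneous. A request served at time $s$ incurs delay cost $D_k(s)$. Algorithm ALG maintains a request counter $RC_k$ for each request and an element counter $EC_e$ for each element, with $EC_e=0$ initially. When $r_k$ arrives, $RC_k$ is created with value $0$. While $r_k$ is pending in ALG, $RC_k$ and $EC_{e_k}$ each increase by exactly the delay $r_k$ incurs; after $r_k$ is served, $RC_k$ stops increasing until it is deleted. Events: (i) prefix-request-counters event on $\ell\in[n]$, occurring when the sum of the non-deleted request counters of requests whose elements are currently in positions $1,\dots,\ell$ reaches $\ell$: ALG accesses the first $\min(2\ell,n)$ positions and deletes the request counters of requests for the elements in the first $\ell$ positions; (ii) element-counter event on $e$, occurring when $EC_e$ reaches the current position $\ell$ of $e$: ALG accesses the first $\min(2\ell,n)$ positions, deletes all request counters of requests for $e$, sets $EC_e\leftarrow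 0$, and moves $e$ to the front by $\ell-1$ adjacent swaps. For a request $r_k$ let $s_k$ be the time ALG serves it ($s_k=\infty$ if never); $d_k(t)=D_k(\min(t,s_k))$ and $d_k=\sup_t d_k(t)$. Request $r_k$ is active in ALG from its arrival until ALG serves it; frozen with $RC_k$ from the time ALG serves it until $RC_k$ is deleted; frozen without $RC_k$ from the deletion of $RC_k$ until the next element-counter event on $e_k$ (at which $EC_{e_k}$ is zeroed); deleted afterwards. *)

theory Defs
  imports "HOL-Analysis.Analysis"
begin

(* Elements are 0..<n, requests are 0..<m.  Request k asks for element  el k,
   arrives at time  arr k  and has delay function  D k.
   The list is a  nat list  (head = position 1); the initial list is L0.
   An execution of ALG is described by the finite list  evs  of its events,
   each a pair (time, action), in the order ALG performs them. *)

datatype act = PrefixEv nat  (* prefix-request-counters event on l *)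
             | ElemEv nat

(* 1-based position of x in the list *)
fun lpos :: "nat list \<Rightarrow> nat \<Rightarrow> nat" where
  "lpos [] x = 0"
| "lpos (y # ys) x = (if x = y then 1 else Suc (lpos ys x))"

fun apply_act :: "nat list \<Rightarrow> act \<Rightarrow> nat list" where
  "apply_act L (PrefixEv l) = L"
| "apply_act L (ElemEv e) = e # remove1 e L"

definition lst :: "nat list \<Rightarrow> (real \<times> act) list \<Rightarrow> nat \<Rightarrow> nat list" where
  "lst L0 evs j = foldl (\<lambda>L a. apply_act L (snd a)) L0 (take j evs)"

fun thr :: "nat list \<Rightarrow> act \<Rightarrow> nat" where
  "thr L (PrefixEv l) = l"
| "thr L (ElemEv e) = lpos L e"

(* event i (an access to the first min(2l,n) positions) serves request k *)
definition serves :: "nat \<Rightarrow> (nat \<Rightarrow> nat) \<Rightarrow> (nat \<Rightarrow> real) \<Rightarrow> nat list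
    \<Rightarrow> (real \<times> act) list \<Rightarrow> nat \<Rightarrow> nat \<Rightarrow> bool" where
  "serves n el arr L0 evs i k \<longleftrightarrow> i < length evs \<and> arr k \<le> fst (evs ! i) \<and>
     lpos (lst L0 evs i) (el k) \<le> min (2 * thr (lst L0 evs i) (snd (evs ! i))) n"

definition served_before where
  "served_before n el arr L0 evs j k \<longleftrightarrow> (\<exists>i<j. serves n el arr L0 evs i k)"

definition served where
  "served n el arr L0 evs k \<longleftrightarrow> (\<exists>i. serves n el arr L0 evs i k)"

(* s_k : time at which ALG serves r_k (only meaningful if served) *)
definition stime where
  "stime n el arr L0 evs k = fst (evs ! (LEAST i. serves n el arr L0 evs i k))"

(* d_k(t) = D_k(min(t, s_k)), with s_k = infinity if never served *)
definition dfun :: "nat \<Rightarrow> (nat \<Rightarrow> nat) \<Rightarrow> (nat \<Rightarrow> real) \<Rightarrow> (nat \<Rightarrow> real \<Rightarrow> real)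
    \<Rightarrow> nat list \<Rightarrow> (real \<times> act) list \<Rightarrow> nat \<Rightarrow> real \<Rightarrow> real" where
  "dfun n el arr D L0 evs k t =
     D k (if served n el arr L0 evs k then min t (stime n el arr L0 evs k) else t)"

definition dtot where
  "dtot n el arr D L0 evs k = (SUP t. ereal (dfun n el arr D L0 evs k t))"

definition deletes where
  "deletes el arr L0 evs i k \<longleftrightarrow> i < length evs \<and> arr k \<le> fst (evs ! i) \<and>
     (case snd (evs ! i) of
        PrefixEv l \<Rightarrow> lpos (lst L0 evs i) (el k) \<le> l
      | ElemEv e \<Rightarrow> e = el k)"

definition deleted where
  "deleted el arr L0 evs j k \<longleftrightarrow> (\<exists>i<j. deletes el arr L0 evs i k)"

definition RCsum where
  "RCsum n m el arr D L0 evs j t l =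
     (\<Sum>k\<in>{k. k < m \<and> arr k \<le> t \<and> \<not> deleted el arr L0 evs j k \<and>
                lpos (lst L0 evs j) (el k) \<le> l}. dfun n el arr D L0 evs k t)"

(* element counter EC_e after the first j events, at time t: the delay incurred by
   requests for e since the last element-counter event on e (EC_e = 0 initially) *)
definition EC where
  "EC n m el arr D L0 evs j e t =
     (\<Sum>k\<in>{k. k < m \<and> el k = e}.
        dfun n el arr D L0 evs k t -
        (if \<exists>i<j. snd (evs ! i) = ElemEv e
         then dfun n el arr D L0 evs k (fst (evs ! (GREATEST i. i < j \<and> snd (evs ! i) = ElemEv e)))
         else 0))"

(* the condition triggering event j, evaluated in the state after the first j events *)
definition triggered where
  "triggered n m el arr D L0 evs j \<longleftrightarrow>
     (case snd (evs ! j) of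
        PrefixEv l \<Rightarrow> 1 \<le> l \<and> l \<le> n \<and> RCsum n m el arr D L0 evs j (fst (evs ! j)) l \<ge> real l
      | ElemEv e \<Rightarrow> e < n \<and> EC n m el arr D L0 evs j e (fst (evs ! j)) \<ge> real (lpos (lst L0 evs j) e))"

definition nev :: "(real \<times> act) list \<Rightarrow> real \<Rightarrow> nat" where
  "nev evs t = card {i. i < length evs \<and> fst (evs ! i) \<le> t}"

(* evs is an execution of ALG on the input: events are in time order, each event
   is triggered when it is performed, and after all events up to time t no
   counter has reached its threshold (so every event happens as soon as triggered) *)
definition alg_run where
  "alg_run n m el arr D L0 evs \<longleftrightarrow>
     sorted (map fst evs) \<and>
     (\<forall>j < length evs. triggered n m el arr D L0 evs j) \<and>
     (\<forall>t. (\<forall>l\<in>{1..n}. RCsum n m el arr D L0 evs (nev evs t) t l < real l) \<and>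
          (\<forall>e<n. EC n m el arr D L0 evs (nev evs t) e t < real (lpos (lst L0 evs (nev evs t)) e)))"

definition valid_input where
  "valid_input n m el arr D L0 \<longleftrightarrow>
     distinct L0 \<and> set L0 = {0..<n} \<and>
     (\<forall>k<m. el k < n \<and> (\<forall>t. 0 \<le> D k t) \<and> mono (D k) \<and>
            (\<forall>t\<le>arr k. D k t = 0) \<and> continuous_on UNIV (D k))"

end

theory Submission
  imports Defs
begin

lemma lpos_in: "x \<in> set L \<Longrightarrow> 1 \<le> lpos L x \<and> lpos L x \<le> length L"
  by (induction L) auto

lemma lpos_remove1: "distinct L \<Longrightarrow> e \<in> set L \<Longrightarrow> x \<in> set L \<Longrightarrow> lpos L e < lpos L x
   \<Longrightarrow> lpos (remove1 e L) x = lpos L x - 1"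
proof (induction L)
  case Nil then show ?case by simp
next
  case (Cons y ys)
  show ?case
  proof (cases "y = e")
    case True
    then have "x \<noteq> e" using Cons.prems by auto
    then show ?thesis using True by simp
  next
    case False
    then have ey: "e \<in> set ys" using Cons.prems by auto
    have "x \<noteq> y" using Cons.prems False by (auto split: if_splits)
    then have xy: "x \<in> set ys" using Cons.prems by auto
    have "lpos ys e < lpos ys x" using Cons.prems False \<open>x \<noteq> y\<close> by auto
    then have "lpos (remove1 e ys) x = lpos ys x - 1" using Cons ey xy by auto
    moreover have "1 \<le> lpos ys x" using lpos_in[OF xy] by auto
    ultimately show ?thesis using False \<open>x \<noteq> y\<close> by auto
  qed
qed

lemma lpos_move: "distinct L \<Longrightarrow> e \<in> set L \<Longrightarrow> x \<in> set L \<Longrightarrow> lpos L e < lpos L x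
   \<Longrightarrow> lpos (e # remove1 e L) x = lpos L x"
proof -
  assume a: "distinct L" "e \<in> set L" "x \<in> set L" "lpos L e < lpos L x"
  then have "x \<noteq> e" by auto
  moreover have "1 \<le> lpos L x - 1" using a lpos_in[OF a(2)] by auto
  ultimately show ?thesis using lpos_remove1[OF a] by simp
qed

lemma sum_SUP_le:
  fixes f :: "nat \<Rightarrow> real \<Rightarrow> real"
  assumes "finite H" "\<forall>k\<in>H. mono (f k)" "\<forall>k\<in>H. \<forall>x. 0 \<le> f k x"
    "\<forall>x. (\<Sum>k\<in>H. f k x) \<le> B"
  shows "(\<Sum>k\<in>H. SUP x. ereal (f k x)) \<le> ereal B"
  using assms
proof (induction H arbitrary: B rule: finite_induct)
  case empty
  then show ?case by auto
next
  case (insert a H)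
  have nn: "0 \<le> (\<Sum>k\<in>H. SUP x. ereal (f k x))"
    by (rule sum_nonneg) (meson SUP_upper2 UNIV_I ereal_less_eq(5) insert.prems(2) insertCI)
  have key: "(\<Sum>k\<in>H. SUP x. ereal (f k x)) \<le> ereal (B - f a y)" for y
  proof (rule insert.IH)
    show "\<forall>k\<in>H. mono (f k)" "\<forall>k\<in>H. \<forall>x. 0 \<le> f k x" using insert.prems by auto
    show "\<forall>x. (\<Sum>k\<in>H. f k x) \<le> B - f a y"
    proof
      fix x
      have "(\<Sum>k\<in>H. f k x) \<le> (\<Sum>k\<in>H. f k (max x y))"
      proof (rule sum_mono)
        fix k assume "k \<in> H"
        then have "mono (f k)" using insert.prems by auto
        then show "f k x \<le> f k (max x y)" by (rule monoD) auto
      qed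
      moreover have "mono (f a)" using insert.prems by auto
      then have "f a y \<le> f a (max x y)" by (rule monoD) auto
      moreover have "f a (max x y) + (\<Sum>k\<in>H. f k (max x y)) \<le> B"
        using insert.prems(3)[rule_format, of "max x y"] insert.hyps by simp
      ultimately show "(\<Sum>k\<in>H. f k x) \<le> B - f a y" by linarith
    qed
  qed
  obtain s where s: "(\<Sum>k\<in>H. SUP x. ereal (f k x)) = ereal s"
    using key[of 0] nn by (cases "(\<Sum>k\<in>H. SUP x. ereal (f k x))") auto
  have "(SUP x. ereal (f a x)) \<le> ereal (B - s)"
  proof (rule SUP_least)
    fix y show "ereal (f a y) \<le> ereal (B - s)" using key[of y] s by simp
  qed
  then have "(SUP x. ereal (f a x)) + ereal s \<le> ereal B"
    by (cases "(SUP x. ereal (f a x))") auto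
  then show ?case using insert.hyps s by simp
qed


locale run =
  fixes n m :: nat and el :: "nat \<Rightarrow> nat" and arr :: "nat \<Rightarrow> real"
    and D :: "nat \<Rightarrow> real \<Rightarrow> real" and L0 :: "nat list" and evs :: "(real \<times> act) list"
  assumes VI: "valid_input n m el arr D L0"
    and AR: "alg_run n m el arr D L0 evs"
begin

lemma srt: "sorted (map fst evs)" using AR by (simp add: alg_run_def)

lemma trig: "j < length evs \<Longrightarrow> triggered n m el arr D L0 evs j"
  using AR by (simp add: alg_run_def)

lemma time_mono: "i \<le> i' \<Longrightarrow> i' < length evs \<Longrightarrow> fst (evs ! i) \<le> fst (evs ! i')"
  using sorted_nth_mono[OF srt, of i i'] by simp

lemma lst_Suc: "j < length evs \<Longrightarrow> lst L0 evs (Suc j) = apply_act (lst L0 evs j) (snd (evs!j))"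
  by (simp add: lst_def take_Suc_conv_app_nth)

lemma lst_perm: "distinct (lst L0 evs j) \<and> set (lst L0 evs j) = {0..<n}"
proof (induction j)
  case 0
  then show ?case using VI by (simp add: lst_def valid_input_def)
next
  case (Suc j)
  show ?case
  proof (cases "j < length evs")
    case False
    then have "lst L0 evs (Suc j) = lst L0 evs j" by (simp add: lst_def)
    then show ?thesis using Suc by simp
  next
    case True
    note ls = lst_Suc[OF True]
    show ?thesis
    proof (cases "snd (evs ! j)")
      case (PrefixEv l)
      then show ?thesis using ls Suc by simp
    next
      case (ElemEv e)
      then have "e < n" using trig[OF True] by (simp add: triggered_def)
      then have "e \<in> set (lst L0 evs j)" using Suc by simp
      then show ?thesis using ls Suc ElemEv by auto
    qed
  qed
qed

lemma lpos_el: "x < n \<Longrightarrow> 1 \<le> lpos (lst L0 evs j) x \<and> lpos (lst L0 evs j) x \<le> n"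
proof -
  assume "x < n"
  then have "x \<in> set (lst L0 evs j)" using lst_perm by simp
  moreover have "length (lst L0 evs j) = n"
    using lst_perm[of j] distinct_card[of "lst L0 evs j"] by simp
  ultimately show ?thesis using lpos_in[of x "lst L0 evs j"] by simp
qed

lemma nev_le: "nev evs \<tau> \<le> length evs"
proof -
  have "{i. i < length evs \<and> fst (evs ! i) \<le> \<tau>} \<subseteq> {..<length evs}" by auto
  then show ?thesis unfolding nev_def by (metis card_lessThan card_mono finite_lessThan)
qed

lemma nev_mono: "\<tau> \<le> \<tau>' \<Longrightarrow> nev evs \<tau> \<le> nev evs \<tau>'"
  unfolding nev_def by (rule card_mono) auto

lemma nev_char: "i < length evs \<Longrightarrow> (i < nev evs \<tau> \<longleftrightarrow> fst (evs ! i) \<le> \<tau>)"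
proof -
  assume il: "i < length evs"
  define S where "S = {i. i < length evs \<and> fst (evs ! i) \<le> \<tau>}"
  define c where "c = (if \<exists>i<length evs. \<tau> < fst (evs ! i)
                       then (LEAST i. i < length evs \<and> \<tau> < fst (evs ! i)) else length evs)"
  have S: "S = {..<c}"
  proof (cases "\<exists>i<length evs. \<tau> < fst (evs ! i)")
    case True
    then have c: "c = (LEAST i. i < length evs \<and> \<tau> < fst (evs ! i))" by (simp add: c_def)
    from True obtain i0 where i0: "i0 < length evs" "\<tau> < fst (evs ! i0)" by auto
    have cp: "c < length evs \<and> \<tau> < fst (evs ! c)" unfolding c by (rule LeastI[of _ i0]) (use i0 in auto)
    show ?thesis
    proof (intro set_eqI iffI)
      fix x assume "x \<in> S"
      then have x: "x < length evs" "fst (evs ! x) \<le> \<tau>" by (auto simp: S_def)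
      show "x \<in> {..<c}"
      proof (rule ccontr)
        assume "x \<notin> {..<c}"
        then have "c \<le> x" by auto
        then show False using time_mono[OF _ x(1), of c] cp x by auto
      qed
    next
      fix x assume "x \<in> {..<c}"
      then have xc: "x < c" by auto
      then have "x < length evs" using cp by auto
      moreover have "\<not> (x < length evs \<and> \<tau> < fst (evs ! x))"
        using not_less_Least[of x "\<lambda>i. i < length evs \<and> \<tau> < fst (evs ! i)"] xc c by auto
      ultimately show "x \<in> S" by (auto simp: S_def)
    qed
  next
    case False
    then have "c = length evs" unfolding c_def by auto
    then show ?thesis using False by (auto simp: S_def not_less) (metis not_le)
  qed
  then have "nev evs \<tau> = c" unfolding nev_def S_def[symmetric] by simp
  then show ?thesis using S il by (auto simp: S_def)
qed

lemma dfun_nonneg: "k < m \<Longrightarrow> 0 \<le> dfun n el arr D L0 evs k \<tau>"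
  using VI by (simp add: valid_input_def dfun_def)

lemma dfun_mono: "k < m \<Longrightarrow> mono (dfun n el arr D L0 evs k)"
proof -
  assume k: "k < m"
  then have md: "mono (D k)" using VI by (simp add: valid_input_def)
  show ?thesis
  proof (rule monoI)
    fix x y :: real assume "x \<le> y"
    then show "dfun n el arr D L0 evs k x \<le> dfun n el arr D L0 evs k y"
      unfolding dfun_def by (auto intro!: monoD[OF md])
  qed
qed

lemma dfun_cont: "k < m \<Longrightarrow> continuous_on UNIV (dfun n el arr D L0 evs k)"
proof -
  assume k: "k < m"
  then have cd: "continuous_on UNIV (D k)" using VI by (simp add: valid_input_def)
  have "continuous_on UNIV (\<lambda>x. if served n el arr L0 evs k then min x (stime n el arr L0 evs k) else x)"
    by (cases "served n el arr L0 evs k") (auto intro!: continuous_intros)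
  then have "continuous_on UNIV (D k \<circ> (\<lambda>x. if served n el arr L0 evs k then min x (stime n el arr L0 evs k) else x))"
    using continuous_on_compose[OF _ continuous_on_subset[OF cd]] by blast
  then show ?thesis unfolding dfun_def[abs_def] o_def by simp
qed

lemma stime_le: "serves n el arr L0 evs i k \<Longrightarrow> served n el arr L0 evs k \<and> stime n el arr L0 evs k \<le> fst (evs ! i)"
proof -
  assume s: "serves n el arr L0 evs i k"
  then have "(LEAST i. serves n el arr L0 evs i k) \<le> i" by (rule Least_le)
  moreover have "i < length evs" using s by (simp add: serves_def)
  ultimately show ?thesis using s time_mono by (auto simp: served_def stime_def)
qed

lemma dfun_const: "served n el arr L0 evs k \<Longrightarrow> stime n el arr L0 evs k \<le> c \<Longrightarrow> c \<le> \<tau>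
   \<Longrightarrow> dfun n el arr D L0 evs k \<tau> = dfun n el arr D L0 evs k c"
proof -
  assume a: "served n el arr L0 evs k" "stime n el arr L0 evs k \<le> c" "c \<le> \<tau>"
  then have "min \<tau> (stime n el arr L0 evs k) = stime n el arr L0 evs k"
    "min c (stime n el arr L0 evs k) = stime n el arr L0 evs k" by auto
  then show ?thesis using a(1) by (simp add: dfun_def)
qed

lemma deletes_serves: "deletes el arr L0 evs i k \<Longrightarrow> serves n el arr L0 evs i k"
proof -
  assume d: "deletes el arr L0 evs i k"
  then have il: "i < length evs" by (simp add: deletes_def)
  note tr = trig[OF il]
  show ?thesis
  proof (cases "snd (evs ! i)")
    case (PrefixEv l)
    then show ?thesis using d tr by (auto simp: deletes_def serves_def triggered_def)
  next
    case (ElemEv e)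
    then have "e < n" "e = el k" using tr d by (auto simp: triggered_def deletes_def)
    then show ?thesis using d ElemEv lpos_el[of e i] by (auto simp: deletes_def serves_def)
  qed
qed

lemma notsb_notdel: "\<not> served_before n el arr L0 evs j k \<Longrightarrow> \<not> deleted el arr L0 evs j k"
  using deletes_serves by (auto simp: served_before_def deleted_def)

end


definition Kset where "Kset n m el arr L0 evs t N = {k. k < m \<and> lpos (lst L0 evs (nev evs t)) (el k) \<le> N \<and>
              ((arr k \<le> t \<and> \<not> served_before n el arr L0 evs (nev evs t) k) \<or>
               (served_before n el arr L0 evs (nev evs t) k \<and> \<not> deleted el arr L0 evs (nev evs t) k))}"

context run
begin

lemma K_facts: "k \<in> Kset n m el arr L0 evs t N \<Longrightarrow> k < m \<and> arr k \<le> t \<and>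
   \<not> deleted el arr L0 evs (nev evs t) k \<and> lpos (lst L0 evs (nev evs t)) (el k) \<le> N"
proof -
  assume k: "k \<in> Kset n m el arr L0 evs t N"
  show ?thesis
  proof (cases "served_before n el arr L0 evs (nev evs t) k")
    case True
    then obtain i where i: "i < nev evs t" "serves n el arr L0 evs i k" by (auto simp: served_before_def)
    then have "i < length evs" "arr k \<le> fst (evs ! i)" by (auto simp: serves_def)
    then have "arr k \<le> t" using nev_char i by force
    then show ?thesis using k True by (auto simp: Kset_def)
  next
    case False
    then show ?thesis using k notsb_notdel by (auto simp: Kset_def)
  qed
qed

lemma K_served: "k \<in> Kset n m el arr L0 evs t N \<Longrightarrow> i < length evs \<Longrightarrow> nev evs t \<le> i \<Longrightarrow>
   lpos (lst L0 evs i) (el k) \<le> min (2 * thr (lst L0 evs i) (snd (evs!i))) n \<Longrightarrow>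
   \<exists>i'\<le>i. serves n el arr L0 evs i' k"
proof -
  assume k: "k \<in> Kset n m el arr L0 evs t N" and i: "i < length evs" "nev evs t \<le> i"
    and p: "lpos (lst L0 evs i) (el k) \<le> min (2 * thr (lst L0 evs i) (snd (evs!i))) n"
  show ?thesis
  proof (cases "served_before n el arr L0 evs (nev evs t) k")
    case True
    then show ?thesis using i by (auto simp: served_before_def) (meson less_imp_le order_trans)
  next
    case False
    have "\<not> fst (evs ! i) \<le> t" using nev_char[OF i(1), of t] i(2) by simp
    then have "arr k \<le> fst (evs ! i)" using K_facts[OF k] by simp
    then have "serves n el arr L0 evs i k" using i p by (simp add: serves_def)
    then show ?thesis by auto
  qed
qed

lemma H_bound:
  assumes N: "1 \<le> N" "N \<le> n"
  shows "(\<Sum>k\<in>{k \<in> Kset n m el arr L0 evs t N. (N - 1) div 2 < lpos (lst L0 evs (nev evs t)) (el k)}.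
            dtot n el arr D L0 evs k) \<le> ereal (real N)"
proof -
  define j where "j = nev evs t"
  define h where "h = (N - 1) div 2"
  define H where "H = {k \<in> Kset n m el arr L0 evs t N. h < lpos (lst L0 evs j) (el k)}"
  define P where "P i \<longleftrightarrow> j \<le> i \<and> i < length evs \<and> N \<le> 2 * thr (lst L0 evs i) (snd (evs ! i))" for i
  define istar where "istar = (if \<exists>i. P i then LEAST i. P i else length evs)"
  have jl: "j \<le> length evs" unfolding j_def by (rule nev_le)
  have isl: "istar \<le> length evs"
  proof (cases "\<exists>i. P i")
    case True
    then obtain i where "P i" by auto
    then have "(LEAST i. P i) \<le> i" by (rule Least_le)
    moreover have "i < length evs" using \<open>P i\<close> by (simp add: P_def)
    moreover have "istar = (LEAST i. P i)" using True by (simp add: istar_def)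
    ultimately show ?thesis by simp
  qed (simp add: istar_def)
  have at: "P istar" if "istar < length evs"
  proof (cases "\<exists>i. P i")
    case True
    then show ?thesis unfolding istar_def using LeastI_ex[OF True] by simp
  next
    case False then show ?thesis using that by (simp add: istar_def)
  qed
  have jist: "j \<le> istar"
    using at jl isl by (cases "istar < length evs") (auto simp: P_def)
  have before: "i < length evs \<and> thr (lst L0 evs i) (snd (evs ! i)) \<le> h" if "j \<le> i" "i < istar" for i
  proof -
    have il: "i < length evs" using that isl by simp
    have "\<not> P i"
    proof (cases "\<exists>i. P i")
      case True
      then show ?thesis using not_less_Least[of i P] that by (simp add: istar_def)
    next
      case False then show ?thesis by simp
    qed
    then have "2 * thr (lst L0 evs i) (snd (evs ! i)) < N" using that il by (simp add: P_def)
    then have "thr (lst L0 evs i) (snd (evs ! i)) \<le> h" unfolding h_def by presburger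
    then show ?thesis using il by simp
  qed
  have inv: "lpos (lst L0 evs i) x = lpos (lst L0 evs j) x"
    if "j \<le> i" "i \<le> istar" "x < n" "h < lpos (lst L0 evs j) x" for i x
    using that(1,2)
  proof (induction i rule: dec_induct)
    case base then show ?case by simp
  next
    case (step q)
    have qb: "q < length evs" "thr (lst L0 evs q) (snd (evs ! q)) \<le> h" using before step by auto
    have IH: "lpos (lst L0 evs q) x = lpos (lst L0 evs j) x" using step by simp
    show ?case
    proof (cases "snd (evs ! q)")
      case (PrefixEv l)
      then show ?thesis using lst_Suc[OF qb(1)] IH by simp
    next
      case (ElemEv e)
      then have "e < n" using trig[OF qb(1)] by (simp add: triggered_def)
      then have es: "e \<in> set (lst L0 evs q)" using lst_perm by simp
      have xs: "x \<in> set (lst L0 evs q)" using lst_perm that(3) by simp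
      have "lpos (lst L0 evs q) e < lpos (lst L0 evs q) x" using qb(2) ElemEv IH that(4) by simp
      then have "lpos (e # remove1 e (lst L0 evs q)) x = lpos (lst L0 evs q) x"
        using lpos_move lst_perm es xs by blast
      then show ?thesis using lst_Suc[OF qb(1)] IH ElemEv by simp
    qed
  qed
  have Hf: "k < m \<and> arr k \<le> t \<and> \<not> deleted el arr L0 evs j k \<and> lpos (lst L0 evs j) (el k) \<le> N
     \<and> h < lpos (lst L0 evs j) (el k) \<and> el k < n" if "k \<in> H" for k
    using K_facts[of k t N] that VI by (auto simp: H_def j_def valid_input_def)
  have nodel: "\<not> deleted el arr L0 evs i k" if "k \<in> H" "j \<le> i" "i \<le> istar" for k i
  proof
    assume "deleted el arr L0 evs i k"
    then obtain i' where i': "i' < i" "deletes el arr L0 evs i' k" by (auto simp: deleted_def)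
    show False
    proof (cases "i' < j")
      case True
      then have "deleted el arr L0 evs j k" using i' by (auto simp: deleted_def)
      then show False using Hf[OF that(1)] by simp
    next
      case False
      then have b: "i' < length evs" "thr (lst L0 evs i') (snd (evs ! i')) \<le> h"
        using before[of i'] i' that by auto
      have ps: "lpos (lst L0 evs i') (el k) = lpos (lst L0 evs j) (el k)"
        using inv[of i' "el k"] False i' that Hf[OF that(1)] by auto
      show False
      proof (cases "snd (evs ! i')")
        case (PrefixEv l)
        then show False using i'(2) b ps Hf[OF that(1)] by (simp add: deletes_def)
      next
        case (ElemEv e)
        then show False using i'(2) b ps Hf[OF that(1)] by (simp add: deletes_def)
      qed
    qed
  qed
  have finH: "finite H" by (rule finite_subset[of _ "{..<m}"]) (auto simp: H_def Kset_def)
  define g where "g \<tau> = (\<Sum>k\<in>H. dfun n el arr D L0 evs k \<tau>)" for \<tau>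
  have gt: "g \<tau> < real N" if "t \<le> \<tau>" "istar < length evs \<Longrightarrow> \<tau> < fst (evs ! istar)" for \<tau>
  proof -
    define q where "q = nev evs \<tau>"
    have jq: "j \<le> q" unfolding j_def q_def using that(1) by (rule nev_mono)
    have qi: "q \<le> istar"
    proof (cases "istar < length evs")
      case True
      show ?thesis
      proof (rule ccontr)
        assume "\<not> q \<le> istar"
        then have "fst (evs ! istar) \<le> \<tau>" using nev_char[OF True, of \<tau>] by (simp add: q_def)
        then show False using that(2) True by simp
      qed
    next
      case False
      then show ?thesis using nev_le[of \<tau>] isl by (simp add: q_def)
    qed
    have sub: "H \<subseteq> {k. k < m \<and> arr k \<le> \<tau> \<and> \<not> deleted el arr L0 evs q k \<and>
                lpos (lst L0 evs q) (el k) \<le> N}"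
    proof
      fix k assume k: "k \<in> H"
      have "lpos (lst L0 evs q) (el k) = lpos (lst L0 evs j) (el k)"
        using inv[OF jq qi] Hf[OF k] by simp
      then show "k \<in> {k. k < m \<and> arr k \<le> \<tau> \<and> \<not> deleted el arr L0 evs q k \<and>
                lpos (lst L0 evs q) (el k) \<le> N}"
        using Hf[OF k] nodel[OF k jq qi] that(1) by auto
    qed
    have "g \<tau> \<le> RCsum n m el arr D L0 evs q \<tau> N"
      unfolding g_def RCsum_def
      by (rule sum_mono2[OF _ sub]) (auto intro: dfun_nonneg)
    also have "\<dots> < real N"
      using AR N unfolding alg_run_def q_def by auto
    finally show ?thesis .
  qed
  have gmono: "g x \<le> g y" if "x \<le> y" for x y
    unfolding g_def
  proof (rule sum_mono)
    fix k assume "k \<in> H"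
    then have "mono (dfun n el arr D L0 evs k)" using Hf dfun_mono by blast
    then show "dfun n el arr D L0 evs k x \<le> dfun n el arr D L0 evs k y" using that by (rule monoD)
  qed
  have gt0: "istar < length evs \<Longrightarrow> t < fst (evs ! istar)"
    using nev_char[of istar t] jist by (simp add: j_def)
  have gcont: "continuous_on UNIV g"
    unfolding g_def[abs_def] by (rule continuous_on_sum) (use Hf dfun_cont in blast)
  have allt: "\<forall>\<tau>. g \<tau> \<le> real N"
  proof
    fix \<tau>
    show "g \<tau> \<le> real N"
    proof (cases "\<tau> < t")
      case True
      then have "g \<tau> \<le> g t" by (intro gmono) simp
      also have "g t < real N" using gt gt0 by simp
      finally show ?thesis by simp
    next
      case False
      show ?thesis
      proof (cases "istar < length evs \<and> fst (evs ! istar) \<le> \<tau>")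
        case False2: False
        then show ?thesis using gt[of \<tau>] False by force
      next
        case True
        define s where "s = fst (evs ! istar)"
        have ts: "t < s" using gt0 True by (simp add: s_def)
        have "g \<tau> = g s"
          unfolding g_def
        proof (rule sum.cong)
          fix k assume k: "k \<in> H"
          have p: "lpos (lst L0 evs istar) (el k) = lpos (lst L0 evs j) (el k)"
            using inv[OF jist order.refl] Hf[OF k] by simp
          have "N \<le> 2 * thr (lst L0 evs istar) (snd (evs ! istar))" using at True by (simp add: P_def)
          then have "lpos (lst L0 evs istar) (el k) \<le> min (2 * thr (lst L0 evs istar) (snd (evs ! istar))) n"
            using p Hf[OF k] N by simp
          then obtain i' where i': "i' \<le> istar" "serves n el arr L0 evs i' k"
            using K_served[of k t N istar] True jist Hf k by (auto simp: H_def j_def)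
          have "served n el arr L0 evs k \<and> stime n el arr L0 evs k \<le> s"
            using stime_le[OF i'(2)] time_mono[OF i'(1)] True by (force simp: s_def)
          then show "dfun n el arr D L0 evs k \<tau> = dfun n el arr D L0 evs k s"
            using dfun_const True s_def by blast
        qed simp
        moreover have "g s \<le> real N"
        proof -
          have cl: "closed {x. g x \<le> real N}"
            by (rule closed_Collect_le[OF gcont continuous_on_const])
          have "{t..<s} \<subseteq> {x. g x \<le> real N}"
          proof
            fix x assume "x \<in> {t..<s}"
            then show "x \<in> {x. g x \<le> real N}" using gt[of x] by (force simp: s_def)
          qed
          then have "closure {t..<s} \<subseteq> {x. g x \<le> real N}" using cl by (rule closure_minimal)
          then have "{t..s} \<subseteq> {x. g x \<le> real N}" using ts by simp
          moreover have "s \<in> {t..s}" using ts by simp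
          ultimately show ?thesis by blast
        qed
        ultimately show ?thesis by simp
      qed
    qed
  qed
  have "(\<Sum>k\<in>H. SUP x. ereal (dfun n el arr D L0 evs k x)) \<le> ereal (real N)"
    by (rule sum_SUP_le[OF finH]) (use Hf dfun_mono dfun_nonneg allt in \<open>auto simp: g_def\<close>)
  then show ?thesis by (simp add: dtot_def H_def h_def j_def)
qed

lemma K_bound: "N \<le> n \<Longrightarrow> (\<Sum>k\<in>Kset n m el arr L0 evs t N. dtot n el arr D L0 evs k) \<le> ereal (2 * real N)"
proof (induction N rule: less_induct)
  case (less N)
  show ?case
  proof (cases "N = 0")
    case True
    have "Kset n m el arr L0 evs t N = {}"
    proof (rule ccontr)
      assume "Kset n m el arr L0 evs t N \<noteq> {}"
      then obtain k where k: "k \<in> Kset n m el arr L0 evs t N" by auto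
      then have "k < m" "lpos (lst L0 evs (nev evs t)) (el k) \<le> N" using K_facts by auto
      moreover have "el k < n" using \<open>k < m\<close> VI by (simp add: valid_input_def)
      ultimately show False using lpos_el[of "el k" "nev evs t"] True by simp
    qed
    then show ?thesis by simp
  next
    case False
    define h where "h = (N - 1) div 2"
    have hN: "h < N" "2 * h \<le> N - 1" using False by (auto simp: h_def)
    define H where "H = {k \<in> Kset n m el arr L0 evs t N. (N - 1) div 2 < lpos (lst L0 evs (nev evs t)) (el k)}"
    have split: "Kset n m el arr L0 evs t N = Kset n m el arr L0 evs t h \<union> H"
      using hN by (auto simp: Kset_def H_def h_def)
    have disj: "Kset n m el arr L0 evs t h \<inter> H = {}"
      by (auto simp: Kset_def H_def h_def)
    have f1: "finite (Kset n m el arr L0 evs t h)"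
      by (rule finite_subset[of _ "{..<m}"]) (auto simp: Kset_def)
    have f2: "finite H"
      by (rule finite_subset[of _ "{..<m}"]) (auto simp: Kset_def H_def)
    have "(\<Sum>k\<in>Kset n m el arr L0 evs t N. dtot n el arr D L0 evs k) =
          (\<Sum>k\<in>Kset n m el arr L0 evs t h. dtot n el arr D L0 evs k) + (\<Sum>k\<in>H. dtot n el arr D L0 evs k)"
      unfolding split by (rule sum.union_disjoint[OF f1 f2 disj])
    also have "\<dots> \<le> ereal (2 * real h) + ereal (real N)"
    proof (rule add_mono)
      show "(\<Sum>k\<in>Kset n m el arr L0 evs t h. dtot n el arr D L0 evs k) \<le> ereal (2 * real h)"
        using less.IH[OF hN(1)] less.prems hN by simp
      show "(\<Sum>k\<in>H. dtot n el arr D L0 evs k) \<le> ereal (real N)"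
        unfolding H_def using H_bound[of N t] False less.prems by simp
    qed
    also have "\<dots> \<le> ereal (2 * real N)"
    proof -
      have "2 * real h + real N \<le> 2 * real N" using hN by linarith
      then show ?thesis by simp
    qed
    finally show ?thesis .
  qed
qed

end

theorem mainTheorem12:
  fixes n m :: nat and el :: "nat \<Rightarrow> nat" and arr :: "nat \<Rightarrow> real"
    and D :: "nat \<Rightarrow> real \<Rightarrow> real" and L0 :: "nat list" and evs :: "(real \<times> act) list"
    and t :: real and N :: nat
  assumes "valid_input n m el arr D L0"
    and "alg_run n m el arr D L0 evs"
    and "1 \<le> N" and "N \<le> n"
  shows "(\<Sum>k\<in>{k. k < m \<and> lpos (lst L0 evs (nev evs t)) (el k) \<le> N \<and>
              ((arr k \<le> t \<and> \<not> served_before n el arr L0 evs (nev evs t) k) \<or>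
               (served_before n el arr L0 evs (nev evs t) k \<and> \<not> deleted el arr L0 evs (nev evs t) k))}.
            dtot n el arr D L0 evs k) \<le> ereal (2 * real N)"
proof -
  interpret run n m el arr D L0 evs using assms(1,2) by unfold_locales
  show ?thesis using K_bound[OF assms(4), of t] by (simp add: Kset_def)
qed

end
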